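(* Let $\mathcal{I}$ be an ideal of $\mathcal{A}(D)$. Then $\mathcal{A}(D)/\mathcal{I}$ is a Lie algebra if and only if every plane of $\Pi(D)$ isomorphic to the affine plane of order $3$ (viewed as the element of $\mathcal{A}(D)$ given by its $9$-element point set) lies in $\mathcal{I}$.
   Context: Let $G$ be a group generated by a conjugacy class $D$ of involutions such that for all $d,e\in D$ the order of $de$ is $1$, $2$ or $3$. The Fischer space $\Pi(D)$ has point set $D$ and lines the triples $\{d,e,d^e\}$ with $d,e\in D$ non-commuting; a plane is the subspace generated by two intersecting lines (it is a dual affine plane of order $2$ or an affine plane of order $3$). $\mathcal{A}(D)$ is the $\mathbb{F}_2$-vector space of finite subsets of $D$ under symmetric difference (basis $D$), with bilinear product determined by $d*e=d+e+f$ if $\{d,e,f\}$ is a line and $d*e=0$ otherwise. A Lie algebra means the product satisfies $x*x=0$ and the Jacobi identity. *)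

theory Defs
  imports "HOL-Algebra.Algebra"
begin

definition gconj :: "('a, 'b) monoid_scheme \<Rightarrow> 'a \<Rightarrow> 'a \<Rightarrow> 'a" where
  "gconj G d e = inv\<^bsub>G\<^esub> e \<otimes>\<^bsub>G\<^esub> d \<otimes>\<^bsub>G\<^esub> e"

definition fischer_line :: "('a, 'b) monoid_scheme \<Rightarrow> 'a set \<Rightarrow> 'a set \<Rightarrow> bool" where
  "fischer_line G D L \<longleftrightarrow>
     (\<exists>d\<in>D. \<exists>e\<in>D. d \<otimes>\<^bsub>G\<^esub> e \<noteq> e \<otimes>\<^bsub>G\<^esub> d \<and> L = {d, e, gconj G d e})"

definition fischer_subspace :: "('a, 'b) monoid_scheme \<Rightarrow> 'a set \<Rightarrow> 'a set \<Rightarrow> bool" where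
  "fischer_subspace G D S \<longleftrightarrow> S \<subseteq> D \<and>
     (\<forall>L. fischer_line G D L \<longrightarrow> 2 \<le> card (L \<inter> S) \<longrightarrow> L \<subseteq> S)"

definition fischer_span :: "('a, 'b) monoid_scheme \<Rightarrow> 'a set \<Rightarrow> 'a set \<Rightarrow> 'a set" where
  "fischer_span G D Y = {p. \<forall>S. fischer_subspace G D S \<and> Y \<subseteq> S \<longrightarrow> p \<in> S}"

definition fischer_plane :: "('a, 'b) monoid_scheme \<Rightarrow> 'a set \<Rightarrow> 'a set \<Rightarrow> bool" where
  "fischer_plane G D P \<longleftrightarrow> (\<exists>L1 L2. fischer_line G D L1 \<and> fischer_line G D L2 \<and>
      L1 \<noteq> L2 \<and> L1 \<inter> L2 \<noteq> {} \<and> P = fischer_span G D (L1 \<union> L2))"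

text \<open>The affine plane AG(2,3) of order 3: points F_3^2 (coordinates in {0,1,2}),
  lines = 3-sets of points whose coordinate sums vanish mod 3.\<close>
definition ag23_points :: "(int \<times> int) set" where
  "ag23_points = {0..2} \<times> {0..2}"

definition ag23_line :: "(int \<times> int) set \<Rightarrow> bool" where
  "ag23_line L \<longleftrightarrow> L \<subseteq> ag23_points \<and> card L = 3 \<and>
     (\<Sum>p\<in>L. fst p) mod 3 = 0 \<and> (\<Sum>p\<in>L. snd p) mod 3 = 0"

definition iso_affine_plane_3 :: "('a, 'b) monoid_scheme \<Rightarrow> 'a set \<Rightarrow> 'a set \<Rightarrow> bool" where
  "iso_affine_plane_3 G D P \<longleftrightarrow> (\<exists>f. bij_betw f P ag23_points \<and>
      (\<forall>L. L \<subseteq> P \<longrightarrow> (fischer_line G D L \<longleftrightarrow> ag23_line (f ` L))))"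

definition symdiff :: "'a set \<Rightarrow> 'a set \<Rightarrow> 'a set" where
  "symdiff x y = (x - y) \<union> (y - x)"

text \<open>Elements: finite subsets of D (F_2-span of the basis D).\<close>
definition AD :: "'a set \<Rightarrow> 'a set set" where
  "AD D = {x. finite x \<and> x \<subseteq> D}"

text \<open>Product of basis elements: d*e = d+e+f if {d,e,f} is a line, else 0.\<close>
definition basis_prod :: "('a, 'b) monoid_scheme \<Rightarrow> 'a \<Rightarrow> 'a \<Rightarrow> 'a set" where
  "basis_prod G d e =
     (if d \<otimes>\<^bsub>G\<^esub> e \<noteq> e \<otimes>\<^bsub>G\<^esub> d then {d, e, gconj G d e} else {})"

text \<open>Bilinear extension over F_2: z occurs in x*y iff it occurs in an odd number of
  the products d*e with d in x, e in y.\<close>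
definition amult :: "('a, 'b) monoid_scheme \<Rightarrow> 'a set \<Rightarrow> 'a set \<Rightarrow> 'a set" where
  "amult G x y = {z. odd (card {(d, e). d \<in> x \<and> e \<in> y \<and> z \<in> basis_prod G d e})}"

definition AD_ideal :: "('a, 'b) monoid_scheme \<Rightarrow> 'a set \<Rightarrow> 'a set set \<Rightarrow> bool" where
  "AD_ideal G D I \<longleftrightarrow> I \<subseteq> AD D \<and> {} \<in> I \<and>
     (\<forall>x\<in>I. \<forall>y\<in>I. symdiff x y \<in> I) \<and>
     (\<forall>x\<in>I. \<forall>y\<in>AD D. amult G x y \<in> I \<and> amult G y x \<in> I)"

text \<open>A(D)/I is a Lie algebra: in the quotient x*x = 0 and the Jacobi identity holds,
  i.e. the corresponding representatives lie in I.\<close>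
definition quotient_is_lie :: "('a, 'b) monoid_scheme \<Rightarrow> 'a set \<Rightarrow> 'a set set \<Rightarrow> bool" where
  "quotient_is_lie G D I \<longleftrightarrow>
     (\<forall>x\<in>AD D. amult G x x \<in> I) \<and>
     (\<forall>x\<in>AD D. \<forall>y\<in>AD D. \<forall>z\<in>AD D.
        symdiff (amult G x (amult G y z))
          (symdiff (amult G y (amult G z x)) (amult G z (amult G x y))) \<in> I)"

end

theory Submission
  imports Defs
begin

locale fis = group G for G (structure) +
  fixes D
  assumes Dc: "D \<subseteq> carrier G"
    and Dinv: "\<And>x. x \<in> D \<Longrightarrow> x \<otimes> x = \<one>"
    and Dcl: "\<And>x g. x \<in> D \<Longrightarrow> g \<in> D \<Longrightarrow> g \<otimes> x \<otimes> g \<in> D"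
    and Dbr: "\<And>x y. x \<in> D \<Longrightarrow> y \<in> D \<Longrightarrow> x \<otimes> y \<noteq> y \<otimes> x \<Longrightarrow> x \<otimes> y \<otimes> x = y \<otimes> x \<otimes> y"
begin

lemma Dcar[simp]: "x \<in> D \<Longrightarrow> x \<in> carrier G" using Dc by auto

lemma Dinv2[simp]: "x \<in> D \<Longrightarrow> y \<in> carrier G \<Longrightarrow> x \<otimes> (x \<otimes> y) = y"
  by (metis Dcar Dinv l_one m_assoc)

lemma Dinvv[simp]: "x \<in> D \<Longrightarrow> inv x = x"
  by (metis Dcar Dinv inv_equality)

lemma Dcl'[simp]: "x \<in> D \<Longrightarrow> g \<in> D \<Longrightarrow> g \<otimes> (x \<otimes> g) \<in> D"
  using Dcl by (simp add: m_assoc)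

lemma Dbr': "x \<in> D \<Longrightarrow> y \<in> D \<Longrightarrow> x \<otimes> y \<noteq> y \<otimes> x \<Longrightarrow> x \<otimes> (y \<otimes> x) = y \<otimes> (x \<otimes> y)"
  using Dbr by (simp add: m_assoc)

definition T where "T x y z \<longleftrightarrow> x \<in> D \<and> y \<in> D \<and> x \<otimes> y \<noteq> y \<otimes> x \<and> z = y \<otimes> (x \<otimes> y)"

lemma T_sym: "T x y z \<Longrightarrow> T y x z"
  unfolding T_def using Dbr' by metis

lemma T_rot: "T x y z \<Longrightarrow> T x z y"
proof -
  assume "T x y z"
  hence x: "x \<in> D" and y: "y \<in> D" and nc: "x \<otimes> y \<noteq> y \<otimes> x" and z: "z = y \<otimes> (x \<otimes> y)"
    unfolding T_def by auto
  have br: "x \<otimes> (y \<otimes> x) = y \<otimes> (x \<otimes> y)" using Dbr' x y nc .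
  have zD: "z \<in> D" using z x y by simp
  have zxz: "z \<otimes> (x \<otimes> z) = y"
  proof -
    have "z \<otimes> (x \<otimes> z) = y \<otimes> (x \<otimes> (y \<otimes> (x \<otimes> (y \<otimes> (x \<otimes> y)))))"
      using z x y by (simp add: m_assoc)
    also have "\<dots> = y \<otimes> (x \<otimes> (x \<otimes> (y \<otimes> (x \<otimes> (x \<otimes> y)))))"
      using br x y by (metis (no_types) Dcar m_assoc m_closed)
    also have "\<dots> = y" using x y by simp
    finally show ?thesis .
  qed
  have nc2: "x \<otimes> z \<noteq> z \<otimes> x"
  proof
    assume "x \<otimes> z = z \<otimes> x"
    hence "z \<otimes> (x \<otimes> z) = x" using x zD by (metis Dcar Dinv2 m_assoc)
    hence "y = x" using zxz by simp
    thus False using nc by simp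
  qed
  show "T x z y" unfolding T_def using x zD nc2 zxz by simp
qed


lemma T_D: "T x y z \<Longrightarrow> x \<in> D \<and> y \<in> D \<and> z \<in> D"
  unfolding T_def by auto

lemma T_nc: "T x y z \<Longrightarrow> x \<otimes> y \<noteq> y \<otimes> x"
  unfolding T_def by auto

lemma T_eq: "T x y z \<Longrightarrow> y \<otimes> (x \<otimes> y) = z"
  unfolding T_def by auto

lemma T_all: "T x y z \<Longrightarrow> T x y z \<and> T y x z \<and> T x z y \<and> T z x y \<and> T y z x \<and> T z y x"
  by (meson T_rot T_sym)

lemma conjT: assumes "T x y z" "g \<in> D" shows "T (g \<otimes> (x \<otimes> g)) (g \<otimes> (y \<otimes> g)) (g \<otimes> (z \<otimes> g))"
proof -
  have x: "x \<in> D" and y: "y \<in> D" and nc: "x \<otimes> y \<noteq> y \<otimes> x" and z: "z = y \<otimes> (x \<otimes> y)"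
    using assms unfolding T_def by auto
  have g: "g \<in> carrier G" using assms by simp
  have "(g \<otimes> (x \<otimes> g)) \<otimes> (g \<otimes> (y \<otimes> g)) = g \<otimes> (x \<otimes> (y \<otimes> g))"
    using x y assms(2) by (simp add: m_assoc)
  moreover have "(g \<otimes> (y \<otimes> g)) \<otimes> (g \<otimes> (x \<otimes> g)) = g \<otimes> (y \<otimes> (x \<otimes> g))"
    using x y assms(2) by (simp add: m_assoc)
  moreover have "g \<otimes> (x \<otimes> (y \<otimes> g)) \<noteq> g \<otimes> (y \<otimes> (x \<otimes> g))"
    using nc x y g by (metis Dcar l_cancel m_assoc m_closed r_cancel)
  moreover have "g \<otimes> (z \<otimes> g) = (g \<otimes> (y \<otimes> g)) \<otimes> ((g \<otimes> (x \<otimes> g)) \<otimes> (g \<otimes> (y \<otimes> g)))"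
    using x y assms(2) z by (simp add: m_assoc)
  ultimately show ?thesis unfolding T_def using x y assms(2) by simp
qed

lemma affine:
  assumes d: "d \<in> D" and e: "e \<in> D" and f: "f \<in> D"
    and de: "d \<otimes> e \<noteq> e \<otimes> d" and df: "d \<otimes> f \<noteq> f \<otimes> d" and ef: "e \<otimes> f \<noteq> f \<otimes> e"
    and fa: "f \<otimes> (d \<otimes> (e \<otimes> d)) \<noteq> (d \<otimes> (e \<otimes> d)) \<otimes> f"
  assumes P20_def: "P20 = d \<otimes> (e \<otimes> d)" and P02_def: "P02 = d \<otimes> (f \<otimes> d)" and P22_def: "P22 = e \<otimes> (f \<otimes> e)"
    and P11_def: "P11 = P22 \<otimes> (d \<otimes> P22)" and P21_def: "P21 = P02 \<otimes> (e \<otimes> P02)" and P12_def: "P12 = P20 \<otimes> (f \<otimes> P20)"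
  shows "T e d P20 \<and> T f d P02 \<and> T f e P22 \<and> T f P20 P12 \<and> T d P22 P11 \<and> T e P02 P21
     \<and> T d P21 P12 \<and> T P20 P02 P11 \<and> T e P11 P12 \<and> T f P11 P21 \<and> T P22 P02 P12 \<and> T P22 P21 P20"
proof -
  have L1: "T e d P20" unfolding T_def P20_def using d e de by simp
  have L2: "T f d P02" unfolding T_def P02_def using d f df by simp
  have L4: "T f e P22" unfolding T_def P22_def using e f ef by simp
  have L6: "T f P20 P12" unfolding T_def P12_def using f fa d e by (simp add: P20_def)
  note A1 = T_all[OF L1] and A2 = T_all[OF L2] and A4 = T_all[OF L4] and A6 = T_all[OF L6]
  have "T (e \<otimes> (f \<otimes> e)) (e \<otimes> (P20 \<otimes> e)) (e \<otimes> (P12 \<otimes> e))" using conjT[OF L6 e] .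
  hence "T P22 d (e \<otimes> (P12 \<otimes> e))" using A1 T_eq P22_def by metis
  hence L3': "T d P22 (e \<otimes> (P12 \<otimes> e))" by (rule T_sym)
  hence eP11: "e \<otimes> (P12 \<otimes> e) = P11" using T_eq P11_def by metis
  have L3: "T d P22 P11" using L3' eP11 by simp
  note A3 = T_all[OF L3]
  have "T (d \<otimes> (f \<otimes> d)) (d \<otimes> (P20 \<otimes> d)) (d \<otimes> (P12 \<otimes> d))" using conjT[OF L6 d] .
  hence "T P02 e (d \<otimes> (P12 \<otimes> d))" using A1 T_eq P02_def by metis
  hence L5': "T e P02 (d \<otimes> (P12 \<otimes> d))" by (rule T_sym)
  hence dP21: "d \<otimes> (P12 \<otimes> d) = P21" using T_eq P21_def by metis
  have L5: "T e P02 P21" using L5' dP21 by simp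
  note A5 = T_all[OF L5]
  have "T (P02 \<otimes> (f \<otimes> P02)) (P02 \<otimes> (e \<otimes> P02)) (P02 \<otimes> (P22 \<otimes> P02))" using conjT[OF L4] A2 T_D by blast
  hence L7': "T d P21 (P02 \<otimes> (P22 \<otimes> P02))" using A2 A5 T_eq P21_def by metis
  have "P21 \<otimes> (d \<otimes> P21) = P12"
  proof -
    have "P21 \<otimes> (d \<otimes> P21) = d \<otimes> (P21 \<otimes> d)" using T_eq T_sym L7' by metis
    also have "\<dots> = P12" using dP21[symmetric] d A6 T_D[OF L6] by (simp add: m_assoc Dinv)
    finally show ?thesis .
  qed
  hence L7: "T d P21 P12" using L7' T_eq by metis
  have "T (d \<otimes> (e \<otimes> d)) (d \<otimes> (f \<otimes> d)) (d \<otimes> (P22 \<otimes> d))" using conjT[OF L4 d] by (rule T_sym)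
  hence L8: "T P20 P02 P11" using A3 T_eq P20_def P02_def by metis
  have "T (P22 \<otimes> (f \<otimes> P22)) (P22 \<otimes> (d \<otimes> P22)) (P22 \<otimes> (P02 \<otimes> P22))" using conjT[OF L2] A4 T_D by blast
  hence L9': "T e P11 (P22 \<otimes> (P02 \<otimes> P22))" using A4 T_eq P11_def by metis
  have "P11 \<otimes> (e \<otimes> P11) = P12"
  proof -
    have "P11 \<otimes> (e \<otimes> P11) = e \<otimes> (P11 \<otimes> e)" using T_eq T_sym L9' by metis
    also have "\<dots> = P12" using eP11[symmetric] e A6 T_D[OF L6] by (simp add: m_assoc Dinv)
    finally show ?thesis .
  qed
  hence L9: "T e P11 P12" using L9' T_eq by metis
  note A9 = T_all[OF L9]
  have "T (f \<otimes> (d \<otimes> f)) (f \<otimes> (P22 \<otimes> f)) (f \<otimes> (P11 \<otimes> f))" using conjT[OF L3 f] .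
  hence "T P02 e (f \<otimes> (P11 \<otimes> f))" using A2 A4 T_eq by metis
  hence fP11: "f \<otimes> (P11 \<otimes> f) = P21" using A5 T_eq by metis
  have "T (P22 \<otimes> (e \<otimes> P22)) (P22 \<otimes> (d \<otimes> P22)) (P22 \<otimes> (P20 \<otimes> P22))" using conjT[OF L1] A4 T_D by blast
  hence L10': "T f P11 (P22 \<otimes> (P20 \<otimes> P22))" using A4 T_eq P11_def by metis
  have "P11 \<otimes> (f \<otimes> P11) = P21" using L10' T_eq T_sym fP11 by metis
  hence L10: "T f P11 P21" using L10' T_eq by metis
  have "T (f \<otimes> (e \<otimes> f)) (f \<otimes> (d \<otimes> f)) (f \<otimes> (P20 \<otimes> f))" using conjT[OF L1 f] .
  hence L11: "T P22 P02 P12" using A2 A4 A6 T_eq by metis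
  have "T (f \<otimes> (e \<otimes> f)) (f \<otimes> (P11 \<otimes> f)) (f \<otimes> (P12 \<otimes> f))" using conjT[OF L9 f] .
  hence L12: "T P22 P21 P20" using A4 A6 fP11 T_eq by metis
  show ?thesis using L1 L2 L3 L4 L5 L6 L7 L8 L9 L10 L11 L12 by blast
qed

end

lemma symdiff_iff[simp]: "z \<in> symdiff x y \<longleftrightarrow> (z \<in> x \<longleftrightarrow> z \<notin> y)"
  unfolding symdiff_def by auto

lemma symdiff_empty[simp]: "symdiff {} x = x" "symdiff x {} = x"
  unfolding symdiff_def by auto

lemma card_symdiff_odd: assumes A: "finite A" and B: "finite B"
  shows "odd (card (symdiff A B)) \<longleftrightarrow> (odd (card A) \<longleftrightarrow> \<not> odd (card B))"
proof -
  have e1: "symdiff A B = (A - B) \<union> (B - A)" unfolding symdiff_def by simp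
  have c: "card (symdiff A B) = card (A - B) + card (B - A)"
    unfolding e1 by (rule card_Un_disjoint) (use A B in auto)
  have e2: "A = (A - B) \<union> (A \<inter> B)" by blast
  have "card A = card (A - B) + card (A \<inter> B)"
    by (subst e2, rule card_Un_disjoint) (use A in auto)
  moreover have e3: "B = (B - A) \<union> (A \<inter> B)" by blast
  have "card B = card (B - A) + card (A \<inter> B)"
    by (subst e3, rule card_Un_disjoint) (use B in auto)
  ultimately show ?thesis using c by auto
qed

definition Sp where "Sp G x y z = {(d, e). d \<in> x \<and> e \<in> y \<and> z \<in> basis_prod G d e}"

lemma amult_Sp: "amult G x y = {z. odd (card (Sp G x y z))}"
  unfolding amult_def Sp_def by simp

lemma Sp_fin: "finite x \<Longrightarrow> finite y \<Longrightarrow> finite (Sp G x y z)"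
  unfolding Sp_def by (rule finite_subset[of _ "x \<times> y"]) auto

lemma Sp_l: "Sp G (symdiff x x') y z = symdiff (Sp G x y z) (Sp G x' y z)"
  unfolding Sp_def by auto

lemma Sp_r: "Sp G x (symdiff y y') z = symdiff (Sp G x y z) (Sp G x y' z)"
  unfolding Sp_def by auto

lemma amult_lin_l: assumes "finite x" "finite x'" "finite y"
  shows "amult G (symdiff x x') y = symdiff (amult G x y) (amult G x' y)"
proof (rule Set.set_eqI)
  fix z
  have "finite (Sp G x y z)" "finite (Sp G x' y z)" by (simp_all add: Sp_fin assms)
  thus "z \<in> amult G (symdiff x x') y \<longleftrightarrow> z \<in> symdiff (amult G x y) (amult G x' y)"
    unfolding amult_Sp Sp_l using card_symdiff_odd by simp
qed

lemma amult_lin_r: assumes "finite x" "finite y" "finite y'"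
  shows "amult G x (symdiff y y') = symdiff (amult G x y) (amult G x y')"
proof (rule Set.set_eqI)
  fix z
  have "finite (Sp G x y z)" "finite (Sp G x y' z)" by (simp_all add: Sp_fin assms)
  thus "z \<in> amult G x (symdiff y y') \<longleftrightarrow> z \<in> symdiff (amult G x y) (amult G x y')"
    unfolding amult_Sp Sp_r using card_symdiff_odd by simp
qed

lemma amult_empty[simp]: "amult G {} y = {}" "amult G x {} = {}"
  unfolding amult_def by auto

lemma amult_single: "amult G {d} {e} = basis_prod G d e"
proof -
  have "\<And>z. {(a, b). a \<in> {d} \<and> b \<in> {e} \<and> z \<in> basis_prod G a b} = (if z \<in> basis_prod G d e then {(d,e)} else {})"
    by auto
  thus ?thesis unfolding amult_def by auto
qed

lemma bp_fin: "finite (basis_prod G d e)"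
  unfolding basis_prod_def by auto

lemma amult_fin: assumes "finite x" "finite y" shows "finite (amult G x y)"
proof -
  have "amult G x y \<subseteq> (\<Union>d\<in>x. \<Union>e\<in>y. basis_prod G d e)"
  proof
    fix z assume "z \<in> amult G x y"
    hence "Sp G x y z \<noteq> {}" unfolding amult_Sp by auto
    thus "z \<in> (\<Union>d\<in>x. \<Union>e\<in>y. basis_prod G d e)" unfolding Sp_def by auto
  qed
  thus ?thesis using assms bp_fin by (meson finite_UN_I finite_subset)
qed

definition JJ where "JJ G x y z = symdiff (amult G x (amult G y z)) (symdiff (amult G y (amult G z x)) (amult G z (amult G x y)))"

lemma JJ_rot: "JJ G x y z = JJ G y z x"
  unfolding JJ_def by auto

lemma JJ_lin: assumes "finite x" "finite x'" "finite y" "finite z"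
  shows "JJ G (symdiff x x') y z = symdiff (JJ G x y z) (JJ G x' y z)"
proof -
  have f: "finite (symdiff x x')" using assms unfolding symdiff_def by auto
  have a1: "amult G (symdiff x x') (amult G y z) = symdiff (amult G x (amult G y z)) (amult G x' (amult G y z))"
    using amult_lin_l amult_fin assms by blast
  have "amult G z (symdiff x x') = symdiff (amult G z x) (amult G z x')"
    using amult_lin_r assms by blast
  hence a2: "amult G y (amult G z (symdiff x x')) = symdiff (amult G y (amult G z x)) (amult G y (amult G z x'))"
    using amult_lin_r[where G=G and x=y and y="amult G z x" and y'="amult G z x'"] amult_fin[of z x G] amult_fin[of z x' G] assms by simp
  have "amult G (symdiff x x') y = symdiff (amult G x y) (amult G x' y)"
    using amult_lin_l assms by blast
  hence a3: "amult G z (amult G (symdiff x x') y) = symdiff (amult G z (amult G x y)) (amult G z (amult G x' y))"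
    using amult_lin_r[where G=G and x=z and y="amult G x y" and y'="amult G x' y"] amult_fin[of x y G] amult_fin[of x' y G] assms by simp
  show ?thesis unfolding JJ_def a1 a2 a3 by (rule Set.set_eqI) (simp only: symdiff_iff, blast)
qed

lemma JJ_empty: "JJ G {} y z = {}"
  unfolding JJ_def by simp

lemma closure_lemma:
  assumes I0: "{} \<in> II" and Ic: "\<And>a b. a \<in> II \<Longrightarrow> b \<in> II \<Longrightarrow> symdiff a b \<in> II"
    and F0: "FF {} = {}"
    and Fadd: "\<And>a x. finite x \<Longrightarrow> a \<notin> x \<Longrightarrow> FF (insert a x) = symdiff (FF {a}) (FF x)"
    and XX: "finite XX" and Fs: "\<And>a. a \<in> XX \<Longrightarrow> FF {a} \<in> II"
  shows "FF XX \<in> II"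
  using XX Fs
proof (induction XX rule: finite_induct)
  case empty then show ?case using F0 I0 by simp
next
  case (insert a x)
  have "FF (insert a x) = symdiff (FF {a}) (FF x)" using Fadd[OF insert.hyps(1,2)] .
  moreover have "FF {a} \<in> II" "FF x \<in> II" using insert by auto
  ultimately show ?case using Ic by simp
qed

lemma insert_symdiff: "a \<notin> x \<Longrightarrow> insert a x = symdiff {a} x"
  unfolding symdiff_def by auto

lemma JJ_closure:
  assumes I0: "{} \<in> II" and Ic: "\<And>a b. a \<in> II \<Longrightarrow> b \<in> II \<Longrightarrow> symdiff a b \<in> II"
    and fin: "finite x" "finite y" "finite z"
    and base: "\<And>a b c. a \<in> x \<Longrightarrow> b \<in> y \<Longrightarrow> c \<in> z \<Longrightarrow> JJ G {a} {b} {c} \<in> II"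
  shows "JJ G x y z \<in> II"
proof -
  have add: "JJ G (insert a u) v w = symdiff (JJ G {a} v w) (JJ G u v w)"
    if "finite u" "a \<notin> u" "finite v" "finite w" for a u v w
  proof -
    have "insert a u = symdiff {a} u" using that(2) by (rule insert_symdiff)
    thus ?thesis using JJ_lin[of "{a}" u v w] that by simp
  qed
  have s1: "JJ G {a} {b} z \<in> II" if ab: "a \<in> x" "b \<in> y" for a b
  proof -
    have "JJ G z {a} {b} \<in> II"
    proof (rule closure_lemma[where FF="\<lambda>u. JJ G u {a} {b}", OF I0 Ic JJ_empty])
      show "JJ G (insert c u) {a} {b} = symdiff (JJ G {c} {a} {b}) (JJ G u {a} {b})" if "finite u" "c \<notin> u" for c u
        using add[of u c "{a}" "{b}"] that by simp
      show "finite z" by (rule fin)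
      show "JJ G {c} {a} {b} \<in> II" if "c \<in> z" for c
        using base[OF ab that] JJ_rot[of G "{a}" "{b}" "{c}"] JJ_rot[of G "{b}" "{c}" "{a}"] by simp
    qed
    thus ?thesis using JJ_rot[of G z "{a}" "{b}"] JJ_rot[of G "{a}" "{b}" z] by simp
  qed
  have s2: "JJ G {a} y z \<in> II" if a: "a \<in> x" for a
  proof -
    have "JJ G y z {a} \<in> II"
    proof (rule closure_lemma[where FF="\<lambda>u. JJ G u z {a}", OF I0 Ic JJ_empty])
      show "JJ G (insert c u) z {a} = symdiff (JJ G {c} z {a}) (JJ G u z {a})" if "finite u" "c \<notin> u" for c u
        using add[of u c z "{a}"] that fin by simp
      show "finite y" by (rule fin)
      show "JJ G {c} z {a} \<in> II" if "c \<in> y" for c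
        using s1[OF a that] JJ_rot[of G "{a}" "{c}" z] JJ_rot[of G "{c}" z "{a}"] by simp
    qed
    thus ?thesis using JJ_rot[of G y z "{a}"] JJ_rot[of G z "{a}" y] by simp
  qed
  show ?thesis
  proof (rule closure_lemma[where FF="\<lambda>u. JJ G u y z", OF I0 Ic JJ_empty])
    show "JJ G (insert c u) y z = symdiff (JJ G {c} y z) (JJ G u y z)" if "finite u" "c \<notin> u" for c u
      using add[of u c y z] that fin by simp
    show "finite x" by (rule fin)
    show "JJ G {c} y z \<in> II" if "c \<in> x" for c using s2[OF that] .
  qed
qed

definition third :: "int \<times> int \<Rightarrow> int \<times> int \<Rightarrow> int \<times> int" where
  "third v w = ((- fst v - fst w) mod 3, (- snd v - snd w) mod 3)"

definition pt9 where
  "pt9 a00 a10 a20 a01 a11 a21 a02 a12 a22 v =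
    (if v = (0,0) then a00 else if v = (1,0) then a10 else if v = (2,0) then a20 else
     if v = (0,1) then a01 else if v = (1,1) then a11 else if v = (2,1) then a21 else
     if v = (0,2) then a02 else if v = (1,2) then a12 else a22)"

lemma int02: "{0..2::int} = {0,1,2}" by auto

lemma pts_eq: "ag23_points = {(0,0),(1,0),(2,0),(0,1),(1,1),(2,1),(0,2),(1,2),(2,2)}"
  unfolding ag23_points_def int02 by auto

lemma third_pts: "v \<in> ag23_points \<Longrightarrow> w \<in> ag23_points \<Longrightarrow> third v w \<in> ag23_points"
  unfolding ag23_points_def third_def by auto

lemma mod3_aux: fixes a b c :: int assumes "0 \<le> c" "c \<le> 2" "(a + b + c) mod 3 = 0"
  shows "c = (- a - b) mod 3"
proof -
  have "(- a - b) mod 3 = (c - (a + b + c)) mod 3" by (simp add: algebra_simps)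
  also have "\<dots> = (c mod 3 - (a + b + c) mod 3) mod 3" by (simp add: mod_diff_eq)
  also have "\<dots> = c" using assms by simp
  finally show ?thesis by simp
qed
lemma mod3_eq: fixes a b :: int assumes "0 \<le> a" "a \<le> 2" "0 \<le> b" "b \<le> 2" "(- a - b) mod 3 = a" shows "b = a"
proof -
  have "a \<in> {0,1,2}" "b \<in> {0,1,2}" using assms by auto
  thus ?thesis using assms(5) by auto
qed
lemma mod3_eq': fixes a b :: int assumes "0 \<le> a" "a \<le> 2" "0 \<le> b" "b \<le> 2" "(- a - b) mod 3 = b" shows "b = a"
proof -
  have "a \<in> {0,1,2}" "b \<in> {0,1,2}" using assms by auto
  thus ?thesis using assms(5) by auto
qed
lemma third_line: assumes "v \<in> ag23_points" "w \<in> ag23_points" "v \<noteq> w"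
  shows "ag23_line {v, w, third v w}"
proof -
  define u where "u = third v w"
  have uP: "u \<in> ag23_points" using assms unfolding u_def ag23_points_def third_def by auto
  have uv: "u \<noteq> v" "u \<noteq> w" using assms unfolding u_def ag23_points_def third_def prod_eq_iff
    by (auto dest: mod3_eq mod3_eq')
  have s1: "(fst v + fst w + fst u) mod 3 = 0" "(snd v + snd w + snd u) mod 3 = 0"
    unfolding u_def third_def by (simp_all add: mod_add_right_eq)
  have c: "card {v,w,u} = 3" using uv assms(3) by simp
  have "(\<Sum>p\<in>{v,w,u}. fst p) = fst v + fst w + fst u" "(\<Sum>p\<in>{v,w,u}. snd p) = snd v + snd w + snd u"
    using uv assms(3) by (simp_all add: add.assoc)
  hence "ag23_line {v,w,u}" unfolding ag23_line_def using c s1 uP assms(1,2) by simp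
  thus ?thesis unfolding u_def .
qed

lemma third_unique: assumes "ag23_line M"
  shows "\<exists>v w. v \<in> ag23_points \<and> w \<in> ag23_points \<and> v \<noteq> w \<and> M = {v, w, third v w}"
proof -
  from assms have M: "M \<subseteq> ag23_points" "card M = 3" and s: "(\<Sum>p\<in>M. fst p) mod 3 = 0" "(\<Sum>p\<in>M. snd p) mod 3 = 0"
    unfolding ag23_line_def by auto
  then obtain v w u where Mv: "M = {v,w,u}" "v \<noteq> w" "w \<noteq> u" "v \<noteq> u" by (metis card_3_iff)
  have "(fst v + fst w + fst u) mod 3 = 0" "(snd v + snd w + snd u) mod 3 = 0"
    using s Mv by (simp_all add: add.assoc)
  moreover have "v \<in> ag23_points" "w \<in> ag23_points" "u \<in> ag23_points" using M Mv by auto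
  moreover have "0 \<le> fst u" "fst u \<le> 2" "0 \<le> snd u" "snd u \<le> 2" using \<open>u \<in> ag23_points\<close> unfolding ag23_points_def by auto
  ultimately have "u = third v w" unfolding third_def
    by (metis mod3_aux prod.collapse)
  thus ?thesis using Mv \<open>v \<in> ag23_points\<close> \<open>w \<in> ag23_points\<close> by blast
qed

context fis begin

lemma pt9_T:
  assumes 
   "T e d P20" "T f d P02" "T f e P22" "T f P20 P12" "T d P22 P11" "T e P02 P21"
     "T d P21 P12" "T P20 P02 P11" "T e P11 P12" "T f P11 P21" "T P22 P02 P12" "T P22 P21 P20"
   and v: "v \<in> ag23_points" and w: "w \<in> ag23_points" and vw: "v \<noteq> w"
 shows "T (pt9 d e P20 f P11 P21 P02 P12 P22 v) (pt9 d e P20 f P11 P21 P02 P12 P22 w)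
          (pt9 d e P20 f P11 P21 P02 P12 P22 (third v w))"
proof -
  note A = T_all[OF assms(1)] T_all[OF assms(2)] T_all[OF assms(3)] T_all[OF assms(4)]
    T_all[OF assms(5)] T_all[OF assms(6)] T_all[OF assms(7)] T_all[OF assms(8)]
    T_all[OF assms(9)] T_all[OF assms(10)] T_all[OF assms(11)] T_all[OF assms(12)]
  from v w vw show ?thesis
    unfolding pts_eq
    apply (simp only: insert_iff empty_iff)
    apply (elim disjE)
    by (simp_all add: third_def pt9_def A)
qed


lemma T_dist: "T x y z \<Longrightarrow> x \<noteq> y \<and> x \<noteq> z \<and> y \<noteq> z"
  using T_all T_nc by metis

lemma gconj_D: "d \<in> D \<Longrightarrow> e \<in> D \<Longrightarrow> gconj G d e = e \<otimes> (d \<otimes> e)"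
  unfolding gconj_def by (simp add: m_assoc)

lemma fl_T: "fischer_line G D L \<longleftrightarrow> (\<exists>x y z. T x y z \<and> L = {x,y,z})"
  unfolding fischer_line_def T_def by (auto simp: gconj_D)

lemma line_two: assumes "T x y z" "a \<in> {x,y,z}" "b \<in> {x,y,z}" "a \<noteq> b"
  shows "\<exists>c. T a b c \<and> {x,y,z} = {a,b,c}"
  using assms T_all[OF assms(1)] by auto

lemma sub_T: assumes S: "fischer_subspace G D S" and T: "T x y z" and "x \<in> S" "y \<in> S"
  shows "z \<in> S"
proof -
  have "fischer_line G D {x,y,z}" using T fl_T by blast
  moreover have "2 \<le> card ({x,y,z} \<inter> S)"
  proof -
    have "{x,y} \<subseteq> {x,y,z} \<inter> S" using assms by auto
    hence "card {x,y} \<le> card ({x,y,z} \<inter> S)" by (intro card_mono) auto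
    thus ?thesis using T_dist[OF T] by simp
  qed
  ultimately show ?thesis using S unfolding fischer_subspace_def by blast
qed

lemma plane_of_phi:
  assumes PT: "\<And>v w. v \<in> ag23_points \<Longrightarrow> w \<in> ag23_points \<Longrightarrow> v \<noteq> w \<Longrightarrow> T (\<phi> v) (\<phi> w) (\<phi> (third v w))"
  shows "inj_on \<phi> ag23_points" and "fischer_subspace G D (\<phi> ` ag23_points)"
    and "iso_affine_plane_3 G D (\<phi> ` ag23_points)"
    and "fischer_plane G D (\<phi> ` ag23_points)"
proof -
  show inj: "inj_on \<phi> ag23_points"
  proof (rule inj_onI, rule ccontr)
    fix v w assume "v \<in> ag23_points" "w \<in> ag23_points" "\<phi> v = \<phi> w" "v \<noteq> w"
    thus False using PT T_dist by metis
  qed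
  have D: "\<phi> ` ag23_points \<subseteq> D"
  proof
    fix x assume "x \<in> \<phi> ` ag23_points"
    then obtain v where v: "v \<in> ag23_points" "x = \<phi> v" by auto
    define w where "w = (if v = (0,0) then (1,0) else (0::int,0::int))"
    have w: "w \<in> ag23_points" "v \<noteq> w" unfolding w_def ag23_points_def by auto
    have "T (\<phi> v) (\<phi> w) (\<phi> (third v w))" using PT[OF v(1) w(1) w(2)] .
    thus "x \<in> D" using v T_D by blast
  qed
  show sub: "fischer_subspace G D (\<phi> ` ag23_points)"
    unfolding fischer_subspace_def
  proof (intro conjI D allI impI)
    fix L assume L: "fischer_line G D L" "2 \<le> card (L \<inter> \<phi> ` ag23_points)"
    have "\<exists>x y z. T x y z \<and> L = {x,y,z}" using L(1) fl_T by simp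
    then obtain x y z where T: "T x y z" and Lx: "L = {x,y,z}" by blast
    have fin: "finite (L \<inter> \<phi> ` ag23_points)" using Lx by simp
    have "\<not> (\<forall>a\<in>L \<inter> \<phi> ` ag23_points. \<forall>b\<in>L \<inter> \<phi> ` ag23_points. a = b)"
      using L(2) card_le_Suc0_iff_eq[OF fin] by linarith
    then obtain a b where a: "a \<in> L" "a \<in> \<phi> ` ag23_points" and b: "b \<in> L" "b \<in> \<phi> ` ag23_points" and ab: "a \<noteq> b"
      by blast
    obtain c where c: "T a b c" "{x,y,z} = {a,b,c}" using line_two[OF T _ _ ab] a(1) b(1) Lx by blast
    obtain v where v: "v \<in> ag23_points" "a = \<phi> v" using a(2) by blast
    obtain w where w: "w \<in> ag23_points" "b = \<phi> w" using b(2) by blast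
    have "v \<noteq> w" using v w ab by blast
    hence "T a b (\<phi> (third v w))" using PT[OF v(1) w(1)] v w by simp
    hence "c = \<phi> (third v w)" using c(1) T_eq by metis
    hence "c \<in> \<phi> ` ag23_points" using third_pts[OF v(1) w(1)] by blast
    thus "L \<subseteq> \<phi> ` ag23_points" using c(2) Lx a(2) b(2) by blast
  qed
  show "iso_affine_plane_3 G D (\<phi> ` ag23_points)"
    unfolding iso_affine_plane_3_def
  proof (intro exI conjI allI impI)
    show "bij_betw (inv_into ag23_points \<phi>) (\<phi> ` ag23_points) ag23_points"
      using inj by (simp add: bij_betw_inv_into inj_on_imp_bij_betw)
    fix L assume LP: "L \<subseteq> \<phi> ` ag23_points"
    define M where "M = inv_into ag23_points \<phi> ` L"
    have MP: "M \<subseteq> ag23_points" unfolding M_def using LP inv_into_into[of _ \<phi> ag23_points] by blast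
    have LM: "L = \<phi> ` M" unfolding M_def using LP by (force simp: f_inv_into_f image_image)
    show "fischer_line G D L \<longleftrightarrow> ag23_line (inv_into ag23_points \<phi> ` L)"
      unfolding M_def[symmetric]
    proof
      assume FL: "fischer_line G D L"
      have "\<exists>x y z. T x y z \<and> L = {x,y,z}" using FL fl_T by simp
    then obtain x y z where T: "T x y z" and Lx: "L = {x,y,z}" by blast
      obtain v w where vw: "v \<in> M" "w \<in> M" "x = \<phi> v" "y = \<phi> w" using LM Lx by blast
      have "v \<noteq> w" using vw T_dist T by metis
      have vwP: "v \<in> ag23_points" "w \<in> ag23_points" using vw MP by auto
      hence "T x y (\<phi> (third v w))" using PT[OF vwP \<open>v \<noteq> w\<close>] vw by simp
      hence "z = \<phi> (third v w)" using T T_eq by metis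
      hence "\<phi> ` M = \<phi> ` {v,w,third v w}" using LM Lx vw by simp
      hence "M = {v,w,third v w}" using inj MP vw third_pts
        by (metis (no_types, lifting) empty_subsetI inj_on_image_eq_iff insert_subset subset_eq)
      thus "ag23_line M" using third_line[OF vwP \<open>v \<noteq> w\<close>] by simp
    next
      assume "ag23_line M"
      then obtain v w where "v \<in> ag23_points" "w \<in> ag23_points" "v \<noteq> w" "M = {v, w, third v w}"
        using third_unique by blast
      hence "T (\<phi> v) (\<phi> w) (\<phi> (third v w))" "L = {\<phi> v, \<phi> w, \<phi> (third v w)}" using PT LM by auto
      thus "fischer_line G D L" unfolding fl_T by blast
    qed
  qed
  show "fischer_plane G D (\<phi> ` ag23_points)"
    unfolding fischer_plane_def
  proof (intro exI conjI)
    let ?L1 = "{\<phi> (0,0), \<phi> (1,0), \<phi> (2,0)}" and ?L2 = "{\<phi> (0,0), \<phi> (0,1), \<phi> (0,2)}"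
    have T1: "T (\<phi> (0,0)) (\<phi> (1,0)) (\<phi> (2,0))" using PT[of "(0,0)" "(1,0)"] by (simp add: pts_eq third_def)
    have T2: "T (\<phi> (0,0)) (\<phi> (0,1)) (\<phi> (0,2))" using PT[of "(0,0)" "(0,1)"] by (simp add: pts_eq third_def)
    show "fischer_line G D ?L1" unfolding fl_T using T1 by blast
    show "fischer_line G D ?L2" unfolding fl_T using T2 by blast
    have "\<phi> (0,1) \<noteq> \<phi> (1,0)" "\<phi> (0,1) \<noteq> \<phi> (0,0)" "\<phi> (0,1) \<noteq> \<phi> (2,0)"
      using inj unfolding inj_on_def pts_eq by auto
    thus "?L1 \<noteq> ?L2" by auto
    show "?L1 \<inter> ?L2 \<noteq> {}" by auto
    show "\<phi> ` ag23_points = fischer_span G D (?L1 \<union> ?L2)"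
    proof
      show "fischer_span G D (?L1 \<union> ?L2) \<subseteq> \<phi> ` ag23_points"
        unfolding fischer_span_def using sub by (auto simp: pts_eq)
      show "\<phi> ` ag23_points \<subseteq> fischer_span G D (?L1 \<union> ?L2)"
        unfolding fischer_span_def
      proof (intro subsetI CollectI allI impI)
        fix p S assume p: "p \<in> \<phi> ` ag23_points" and S: "fischer_subspace G D S \<and> ?L1 \<union> ?L2 \<subseteq> S"
        have s1: "\<phi> (0,0) \<in> S" "\<phi> (1,0) \<in> S" "\<phi> (2,0) \<in> S" "\<phi> (0,1) \<in> S" "\<phi> (0,2) \<in> S" using S by auto
        have s2: "\<phi> (2,2) \<in> S" using sub_T[OF conjunct1[OF S] PT[of "(1,0)" "(0,1)"]] s1 by (simp add: pts_eq third_def)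
        have s3: "\<phi> (1,1) \<in> S" using sub_T[OF conjunct1[OF S] PT[of "(0,0)" "(2,2)"]] s1 s2 by (simp add: pts_eq third_def)
        have s4: "\<phi> (2,1) \<in> S" using sub_T[OF conjunct1[OF S] PT[of "(1,0)" "(0,2)"]] s1 by (simp add: pts_eq third_def)
        have s5: "\<phi> (1,2) \<in> S" using sub_T[OF conjunct1[OF S] PT[of "(2,0)" "(0,1)"]] s1 by (simp add: pts_eq third_def)
        show "p \<in> S" using p s1 s2 s3 s4 s5 by (auto simp: pts_eq)
      qed
    qed
  qed
qed

end

context fis begin

lemma bp_eq: "x \<in> D \<Longrightarrow> y \<in> D \<Longrightarrow> basis_prod G x y = (if x \<otimes> y \<noteq> y \<otimes> x then {x, y, y \<otimes> (x \<otimes> y)} else {})"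
  unfolding basis_prod_def by (simp add: gconj_D)

lemma bp_T: "T x y z \<Longrightarrow> basis_prod G x y = {x,y,z}"
  using bp_eq unfolding T_def by auto

lemma bp_comm: "x \<otimes> y = y \<otimes> x \<Longrightarrow> basis_prod G x y = {}"
  unfolding basis_prod_def by simp

lemma bp_sym: assumes "x \<in> D" "y \<in> D" shows "basis_prod G x y = basis_prod G y x"
proof (cases "x \<otimes> y = y \<otimes> x")
  case True thus ?thesis using bp_comm by metis
next
  case False
  hence "T x y (y \<otimes> (x \<otimes> y))" unfolding T_def using assms by simp
  hence "basis_prod G x y = {x, y, y \<otimes> (x \<otimes> y)}" "basis_prod G y x = {y, x, y \<otimes> (x \<otimes> y)}"
    using bp_T T_sym by blast+
  thus ?thesis by (simp add: insert_commute)
qed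

lemma bp_D: assumes "x \<in> D" "y \<in> D" shows "basis_prod G x y \<subseteq> D"
proof (cases "x \<otimes> y = y \<otimes> x")
  case True thus ?thesis using bp_comm by simp
next
  case False thus ?thesis using bp_eq[OF assms] assms by simp
qed

lemma Sp_swap: assumes "x \<subseteq> D" "y \<subseteq> D" shows "Sp G y x z = prod.swap ` Sp G x y z"
proof (rule Set.set_eqI)
  fix p :: "'a \<times> 'a"
  obtain a b where p: "p = (a, b)" by (cases p)
  have "(a, b) \<in> Sp G y x z \<longleftrightarrow> (b, a) \<in> Sp G x y z"
  proof
    assume "(a, b) \<in> Sp G y x z"
    hence "a \<in> y" "b \<in> x" "z \<in> basis_prod G a b" unfolding Sp_def by auto
    moreover have "basis_prod G a b = basis_prod G b a" using bp_sym assms \<open>a \<in> y\<close> \<open>b \<in> x\<close> by blast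
    ultimately show "(b, a) \<in> Sp G x y z" unfolding Sp_def by simp
  next
    assume "(b, a) \<in> Sp G x y z"
    hence "a \<in> y" "b \<in> x" "z \<in> basis_prod G b a" unfolding Sp_def by auto
    moreover have "basis_prod G a b = basis_prod G b a" using bp_sym assms \<open>a \<in> y\<close> \<open>b \<in> x\<close> by blast
    ultimately show "(a, b) \<in> Sp G y x z" unfolding Sp_def by simp
  qed
  moreover have "(a, b) \<in> prod.swap ` Sp G x y z \<longleftrightarrow> (b, a) \<in> Sp G x y z"
    by (metis image_iff prod.swap_def swap_swap fst_conv snd_conv rev_image_eqI)
  ultimately show "p \<in> Sp G y x z \<longleftrightarrow> p \<in> prod.swap ` Sp G x y z" using p by simp
qed

lemma amult_comm: assumes "x \<subseteq> D" "y \<subseteq> D" shows "amult G x y = amult G y x"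
proof -
  have c: "card (Sp G y x z) = card (Sp G x y z)" for z
    unfolding Sp_swap[OF assms] by (rule card_image) (rule inj_swap)
  show ?thesis unfolding amult_Sp by (rule Set.set_eqI) (simp only: mem_Collect_eq c)
qed

lemma amult_self: assumes "finite x" "x \<subseteq> D" shows "amult G x x = {}"
  using assms
proof (induction x rule: finite_induct)
  case empty then show ?case by simp
next
  case (insert a x)
  have a: "a \<in> D" and xD: "x \<subseteq> D" using insert by auto
  have e: "insert a x = symdiff {a} x" using insert_symdiff insert.hyps(2) by metis
  have f: "finite {a}" "finite x" "finite (symdiff {a} x)" using insert.hyps(1) unfolding e[symmetric] by auto
  have "amult G (symdiff {a} x) (symdiff {a} x) = symdiff (amult G {a} (symdiff {a} x)) (amult G x (symdiff {a} x))"
    using amult_lin_l[OF f] .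
  also have "amult G {a} (symdiff {a} x) = symdiff (amult G {a} {a}) (amult G {a} x)"
    using amult_lin_r f by blast
  also have "amult G x (symdiff {a} x) = symdiff (amult G x {a}) (amult G x x)"
    using amult_lin_r f by blast
  also have "amult G {a} {a} = {}" using amult_single bp_comm by metis
  also have "amult G x {a} = amult G {a} x" using amult_comm a xD by simp
  also have "amult G x x = {}" using insert xD by simp
  finally show ?case unfolding e by (simp add: symdiff_def)
qed

lemma fin_symdiff[simp]: "finite x \<Longrightarrow> finite y \<Longrightarrow> finite (symdiff x y)"
  unfolding symdiff_def by auto

lemma amult_3: assumes "u \<noteq> v" "v \<noteq> w" "u \<noteq> w"
  shows "amult G {a} {u,v,w} = symdiff (basis_prod G a u) (symdiff (basis_prod G a v) (basis_prod G a w))"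
proof -
  have eq: "{u,v,w} = symdiff {u} (symdiff {v} {w})" using assms by (intro Set.set_eqI) auto
  have "amult G {a} (symdiff {u} (symdiff {v} {w})) = symdiff (amult G {a} {u}) (amult G {a} (symdiff {v} {w}))"
    by (rule amult_lin_r) auto
  also have "amult G {a} (symdiff {v} {w}) = symdiff (amult G {a} {v}) (amult G {a} {w})"
    by (rule amult_lin_r) auto
  finally show ?thesis unfolding eq amult_single .
qed


lemma symdiff_assoc: "symdiff (symdiff a b) c = symdiff a (symdiff b c)"
  by (rule Set.set_eqI) auto
lemma symdiff_comm: "symdiff a b = symdiff b a"
  by (rule Set.set_eqI) auto
lemma symdiff_lcomm: "symdiff a (symdiff b c) = symdiff b (symdiff a c)"
  by (rule Set.set_eqI) auto
lemma symdiff_self: "symdiff a a = {}"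
  by (rule Set.set_eqI) simp
lemma symdiff_lself: "symdiff a (symdiff a b) = b"
  by (rule Set.set_eqI) auto
lemmas symdiff_ac = symdiff_assoc symdiff_comm symdiff_lcomm symdiff_self symdiff_lself symdiff_empty

lemma three_sd: "a \<noteq> b \<Longrightarrow> b \<noteq> c \<Longrightarrow> a \<noteq> c \<Longrightarrow> {a,b,c} = symdiff {a} (symdiff {b} {c})"
  by (rule Set.set_eqI) auto

lemma T_sd: "T a b c \<Longrightarrow> basis_prod G a b = symdiff {a} (symdiff {b} {c})"
  using bp_T T_dist three_sd by metis

lemma comm_mult: assumes "x \<in> carrier G" "y \<in> carrier G" "z \<in> carrier G" "x \<otimes> y = y \<otimes> x" "x \<otimes> z = z \<otimes> x"
  shows "x \<otimes> (y \<otimes> z) = (y \<otimes> z) \<otimes> x"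
  by (metis assms m_assoc)

lemma comm_conj: assumes g: "g \<in> D" and x: "x \<in> carrier G" and y: "y \<in> carrier G"
  shows "(g \<otimes> (x \<otimes> g)) \<otimes> (g \<otimes> (y \<otimes> g)) = (g \<otimes> (y \<otimes> g)) \<otimes> (g \<otimes> (x \<otimes> g)) \<longleftrightarrow> x \<otimes> y = y \<otimes> x"
proof -
  have gc: "g \<in> carrier G" using g by simp
  have "(g \<otimes> (x \<otimes> g)) \<otimes> (g \<otimes> (y \<otimes> g)) = g \<otimes> ((x \<otimes> y) \<otimes> g)"
    using g x y by (simp add: m_assoc)
  moreover have "(g \<otimes> (y \<otimes> g)) \<otimes> (g \<otimes> (x \<otimes> g)) = g \<otimes> ((y \<otimes> x) \<otimes> g)"
    using g x y by (simp add: m_assoc)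
  moreover have "g \<otimes> ((x \<otimes> y) \<otimes> g) = g \<otimes> ((y \<otimes> x) \<otimes> g) \<longleftrightarrow> x \<otimes> y = y \<otimes> x"
  proof
    assume "g \<otimes> ((x \<otimes> y) \<otimes> g) = g \<otimes> ((y \<otimes> x) \<otimes> g)"
    thus "x \<otimes> y = y \<otimes> x" using gc x y by (meson l_cancel m_closed r_cancel)
  qed simp
  ultimately show ?thesis by simp
qed

lemma JJ_bp: "JJ G {d} {e} {f} = symdiff (amult G {d} (basis_prod G e f))
    (symdiff (amult G {e} (basis_prod G f d)) (amult G {f} (basis_prod G d e)))"
  unfolding JJ_def amult_single ..

lemma amult_T: assumes "T y z w" shows "amult G {a} (basis_prod G y z) =
   symdiff (basis_prod G a y) (symdiff (basis_prod G a z) (basis_prod G a w))"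
  using bp_T[OF assms] amult_3 T_dist[OF assms] by simp

lemma amult_c: assumes "y \<otimes> z = z \<otimes> y" shows "amult G {a} (basis_prod G y z) = {}"
  using bp_comm[OF assms] by simp

lemma JJ_swap: assumes "d \<in> D" "e \<in> D" "f \<in> D" shows "JJ G {d} {e} {f} = JJ G {e} {d} {f}"
proof -
  have s: "{d} \<subseteq> D" "{e} \<subseteq> D" "{f} \<subseteq> D" using assms by auto
  have "amult G {d} {e} \<subseteq> D" "amult G {e} {f} \<subseteq> D" "amult G {f} {d} \<subseteq> D"
    using bp_D assms amult_single by metis+
  hence "amult G {d} (amult G {e} {f}) = amult G {d} (amult G {f} {e})"
    "amult G {e} (amult G {f} {d}) = amult G {e} (amult G {d} {f})"
    "amult G {f} (amult G {d} {e}) = amult G {f} (amult G {e} {d})"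
    using amult_comm s by metis+
  thus ?thesis unfolding JJ_def by (simp add: symdiff_lcomm)
qed

lemma case1: assumes d: "d \<in> D" and e: "e \<in> D" and f: "f \<in> D"
  and fd: "f \<otimes> d = d \<otimes> f" and fe: "f \<otimes> e = e \<otimes> f"
  shows "JJ G {d} {e} {f} = {}"
proof -
  have "f \<otimes> (d \<otimes> e) = (d \<otimes> e) \<otimes> f" using comm_mult fd fe d e f by simp
  hence "f \<otimes> (e \<otimes> (d \<otimes> e)) = (e \<otimes> (d \<otimes> e)) \<otimes> f" using comm_mult fd fe d e f by simp
  hence "amult G {f} (basis_prod G d e) = {}"
  proof (cases "d \<otimes> e = e \<otimes> d")
    case True thus ?thesis using amult_c by simp
  next
    case False
    hence T: "T d e (e \<otimes> (d \<otimes> e))" unfolding T_def using d e by simp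
    show ?thesis using amult_T[OF T] bp_comm fd fe \<open>f \<otimes> (e \<otimes> (d \<otimes> e)) = _\<close> by simp
  qed
  moreover have "amult G {d} (basis_prod G e f) = {}" using amult_c fe by simp
  moreover have "amult G {e} (basis_prod G f d) = {}" using amult_c fd by simp
  ultimately show ?thesis unfolding JJ_bp by simp
qed


lemma mkT: "x \<in> D \<Longrightarrow> y \<in> D \<Longrightarrow> x \<otimes> y \<noteq> y \<otimes> x \<Longrightarrow> T x y (y \<otimes> (x \<otimes> y))"
  unfolding T_def by simp

lemma cj_cancel: "g \<in> D \<Longrightarrow> w \<in> carrier G \<Longrightarrow> g \<otimes> ((g \<otimes> (w \<otimes> g)) \<otimes> g) = w"
  by (simp add: m_assoc Dinv)

lemma cj_comm: "g \<in> D \<Longrightarrow> w \<in> carrier G \<Longrightarrow> g \<otimes> w = w \<otimes> g \<Longrightarrow> g \<otimes> (w \<otimes> g) = w"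
  by (metis Dcar Dinv2 m_assoc)

lemma case2: assumes d: "d \<in> D" and e: "e \<in> D" and f: "f \<in> D"
  and de: "d \<otimes> e \<noteq> e \<otimes> d" and ef: "e \<otimes> f \<noteq> f \<otimes> e" and df: "d \<otimes> f = f \<otimes> d"
  shows "JJ G {d} {e} {f} = {}"
proof -
  define E1 where "E1 = e \<otimes> (d \<otimes> e)"
  define F1 where "F1 = f \<otimes> (e \<otimes> f)"
  have E1D: "E1 \<in> D" and F1D: "F1 \<in> D" unfolding E1_def F1_def using d e f by auto
  have TE1: "T d e E1" unfolding E1_def using mkT d e de by simp
  have TF1: "T e f F1" unfolding F1_def using mkT e f ef by simp
  have TE2: "T f e F1" unfolding F1_def using mkT e f ef Dbr' by (metis T_def)
  have fdf: "f \<otimes> (d \<otimes> f) = d" using cj_comm f d df by simp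
  have fF1f: "f \<otimes> (F1 \<otimes> f) = e" unfolding F1_def using cj_cancel[OF f] e by simp
  have ncdF1: "d \<otimes> F1 \<noteq> F1 \<otimes> d"
    using comm_conj[OF f, of d F1] fdf fF1f de d F1D by simp
  have dE1d: "d \<otimes> (E1 \<otimes> d) = e"
  proof -
    have "E1 = d \<otimes> (e \<otimes> d)" unfolding E1_def using Dbr'[OF d e de] by simp
    thus ?thesis using cj_cancel[OF d] e by simp
  qed
  have dfd: "d \<otimes> (f \<otimes> d) = f" using cj_comm d f df by simp
  have ncfE1: "f \<otimes> E1 \<noteq> E1 \<otimes> f"
    using comm_conj[OF d, of f E1] dfd dE1d ef f E1D by simp
  define XX where "XX = F1 \<otimes> (d \<otimes> F1)"
  have TX: "T d F1 XX" unfolding XX_def using mkT d F1D ncdF1 by simp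
  have X2: "XX = f \<otimes> (E1 \<otimes> f)"
  proof -
    have "XX = f \<otimes> (e \<otimes> (f \<otimes> (d \<otimes> (f \<otimes> (e \<otimes> f)))))" unfolding XX_def F1_def using d e f by (simp add: m_assoc)
    also have "f \<otimes> (d \<otimes> (f \<otimes> (e \<otimes> f))) = d \<otimes> (e \<otimes> f)"
      using fdf d e f by (metis Dcar m_assoc m_closed)
    also have "f \<otimes> (e \<otimes> (d \<otimes> (e \<otimes> f))) = f \<otimes> (E1 \<otimes> f)" unfolding E1_def using d e f by (simp add: m_assoc)
    finally show ?thesis .
  qed
  have TY: "T f E1 XX" using mkT[OF f E1D ncfE1] X2 Dbr'[OF f E1D ncfE1] by simp
  have "amult G {d} (basis_prod G e f) = symdiff (basis_prod G d e) (symdiff (basis_prod G d f) (basis_prod G d F1))"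
    using amult_T[OF TF1] .
  moreover have "amult G {e} (basis_prod G f d) = {}" using amult_c df by simp
  moreover have "amult G {f} (basis_prod G d e) = symdiff (basis_prod G f d) (symdiff (basis_prod G f e) (basis_prod G f E1))"
    using amult_T[OF TE1] .
  moreover have "basis_prod G d f = {}" "basis_prod G f d = {}" using bp_comm df by auto
  ultimately show ?thesis unfolding JJ_bp T_sd[OF TE1] T_sd[OF TX] T_sd[OF TE2] T_sd[OF TY]
    by (simp add: symdiff_ac)
qed

lemma case3a: assumes d: "d \<in> D" and e: "e \<in> D" and f: "f \<in> D"
  and de: "d \<otimes> e \<noteq> e \<otimes> d" and ef: "e \<otimes> f \<noteq> f \<otimes> e" and df: "d \<otimes> f \<noteq> f \<otimes> d"
  and fa: "f \<otimes> (d \<otimes> (e \<otimes> d)) = (d \<otimes> (e \<otimes> d)) \<otimes> f"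
  shows "JJ G {d} {e} {f} = {}"
proof -
  define E1 where "E1 = e \<otimes> (d \<otimes> e)"
  define F1 where "F1 = f \<otimes> (e \<otimes> f)"
  define D1 where "D1 = d \<otimes> (f \<otimes> d)"
  have E1D: "E1 \<in> D" and F1D: "F1 \<in> D" and D1D: "D1 \<in> D" unfolding E1_def F1_def D1_def using d e f by auto
  have E1': "E1 = d \<otimes> (e \<otimes> d)" unfolding E1_def using Dbr'[OF d e de] by simp
  have F1': "F1 = e \<otimes> (f \<otimes> e)" unfolding F1_def using Dbr'[OF e f ef] by simp
  have TE1: "T d e E1" unfolding E1_def using mkT d e de by simp
  have TF1: "T e f F1" unfolding F1_def using mkT e f ef by simp
  have TD1: "T f d D1" unfolding D1_def using mkT f d df by metis
  have cE1f: "E1 \<otimes> f = f \<otimes> E1" using fa E1' by simp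
  have c1: "d \<otimes> F1 = F1 \<otimes> d"
  proof -
    have "e \<otimes> (F1 \<otimes> e) = f" unfolding F1' using cj_cancel[OF e] f by simp
    thus ?thesis using comm_conj[OF e, of d F1] cE1f d F1D by (simp add: E1_def)
  qed
  have c2: "e \<otimes> D1 = D1 \<otimes> e"
  proof -
    have "d \<otimes> (D1 \<otimes> d) = f" unfolding D1_def using cj_cancel[OF d] f by simp
    thus ?thesis using comm_conj[OF d, of e D1] cE1f e D1D by (simp add: E1')
  qed
  have "JJ G {d} {e} {f} = symdiff (symdiff (basis_prod G d e) (symdiff (basis_prod G d f) (basis_prod G d F1)))
    (symdiff (symdiff (basis_prod G e f) (symdiff (basis_prod G e d) (basis_prod G e D1)))
     (symdiff (basis_prod G f d) (symdiff (basis_prod G f e) (basis_prod G f E1))))"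
    unfolding JJ_bp amult_T[OF TF1] amult_T[OF TD1] amult_T[OF TE1] ..
  also have "basis_prod G d F1 = {}" using bp_comm c1 by simp
  also have "basis_prod G e D1 = {}" using bp_comm c2 by simp
  also have "basis_prod G f E1 = {}" using bp_comm cE1f by metis
  also have "basis_prod G e d = basis_prod G d e" using bp_sym d e by simp
  also have "basis_prod G f d = basis_prod G d f" using bp_sym d f by simp
  also have "basis_prod G f e = basis_prod G e f" using bp_sym e f by simp
  finally show ?thesis by (simp add: symdiff_ac)
qed


end

fun sdl :: "'a list \<Rightarrow> 'a set" where
  "sdl [] = {}" | "sdl (x # xs) = symdiff {x} (sdl xs)"

lemma sdl_set: "distinct xs \<Longrightarrow> sdl xs = set xs"
proof (induction xs)
  case Nil then show ?case by simp
next
  case (Cons x xs)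
  then show ?case using insert_symdiff[of x "set xs"] by simp
qed

context fis begin

definition phi9 where
  "phi9 d e f = (let P20 = d \<otimes> (e \<otimes> d); P02 = d \<otimes> (f \<otimes> d); P22 = e \<otimes> (f \<otimes> e);
     P11 = P22 \<otimes> (d \<otimes> P22); P21 = P02 \<otimes> (e \<otimes> P02); P12 = P20 \<otimes> (f \<otimes> P20)
    in pt9 d e P20 f P11 P21 P02 P12 P22)"

lemma case3b: assumes d: "d \<in> D" and e: "e \<in> D" and f: "f \<in> D"
  and de: "d \<otimes> e \<noteq> e \<otimes> d" and ef: "e \<otimes> f \<noteq> f \<otimes> e" and df: "d \<otimes> f \<noteq> f \<otimes> d"
  and fa: "f \<otimes> (d \<otimes> (e \<otimes> d)) \<noteq> (d \<otimes> (e \<otimes> d)) \<otimes> f"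
  shows "JJ G {d} {e} {f} = phi9 d e f ` ag23_points"
    and "\<And>v w. v \<in> ag23_points \<Longrightarrow> w \<in> ag23_points \<Longrightarrow> v \<noteq> w \<Longrightarrow>
           T (phi9 d e f v) (phi9 d e f w) (phi9 d e f (third v w))"
proof -
  define P20 where "P20 = d \<otimes> (e \<otimes> d)"
  define P02 where "P02 = d \<otimes> (f \<otimes> d)"
  define P22 where "P22 = e \<otimes> (f \<otimes> e)"
  define P11 where "P11 = P22 \<otimes> (d \<otimes> P22)"
  define P21 where "P21 = P02 \<otimes> (e \<otimes> P02)"
  define P12 where "P12 = P20 \<otimes> (f \<otimes> P20)"
  have phi: "phi9 d e f = pt9 d e P20 f P11 P21 P02 P12 P22"
    unfolding phi9_def P20_def P02_def P22_def P11_def P21_def P12_def Let_def ..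
  have A: "T e d P20 \<and> T f d P02 \<and> T f e P22 \<and> T f P20 P12 \<and> T d P22 P11 \<and> T e P02 P21
     \<and> T d P21 P12 \<and> T P20 P02 P11 \<and> T e P11 P12 \<and> T f P11 P21 \<and> T P22 P02 P12 \<and> T P22 P21 P20"
    by (rule affine[OF d e f de df ef fa[folded P20_def[symmetric]] P20_def P02_def P22_def P11_def P21_def P12_def])
  have PT: "\<And>v w. v \<in> ag23_points \<Longrightarrow> w \<in> ag23_points \<Longrightarrow> v \<noteq> w \<Longrightarrow>
           T (phi9 d e f v) (phi9 d e f w) (phi9 d e f (third v w))"
    unfolding phi using A pt9_T by blast
  thus "\<And>v w. v \<in> ag23_points \<Longrightarrow> w \<in> ag23_points \<Longrightarrow> v \<noteq> w \<Longrightarrow>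
           T (phi9 d e f v) (phi9 d e f w) (phi9 d e f (third v w))" .
  have inj: "inj_on (phi9 d e f) ag23_points" using plane_of_phi(1)[OF PT] .
  define L where "L = [(0,0),(1,0),(2,0),(0,1),(1,1),(2,1),(0,2),(1,2),(2::int,2::int)]"
  have setL: "set L = ag23_points" unfolding L_def pts_eq by simp
  have mapL: "map (phi9 d e f) L = [d,e,P20,f,P11,P21,P02,P12,P22]"
    unfolding L_def phi pt9_def by simp
  have "distinct (map (phi9 d e f) L)"
    unfolding distinct_map using inj setL by (simp add: L_def)
  hence dist: "distinct [d,e,P20,f,P11,P21,P02,P12,P22]" unfolding mapL .
  have img: "phi9 d e f ` ag23_points = sdl [d,e,P20,f,P11,P21,P02,P12,P22]"
  proof -
    have "phi9 d e f ` ag23_points = set (map (phi9 d e f) L)" using setL by simp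
    also have "\<dots> = set [d,e,P20,f,P11,P21,P02,P12,P22]" unfolding mapL ..
    also have "\<dots> = sdl [d,e,P20,f,P11,P21,P02,P12,P22]" using sdl_set[OF dist] by simp
    finally show ?thesis .
  qed
  define E1 where "E1 = e \<otimes> (d \<otimes> e)"
  define F1 where "F1 = f \<otimes> (e \<otimes> f)"
  have E1': "E1 = P20" unfolding E1_def P20_def using Dbr'[OF d e de] by simp
  have F1': "F1 = P22" unfolding F1_def P22_def using Dbr'[OF e f ef] by simp
  have TE1: "T d e E1" unfolding E1_def using mkT d e de by simp
  have TF1: "T e f F1" unfolding F1_def using mkT e f ef by simp
  have TD1: "T f d P02" unfolding P02_def using mkT f d df by metis
  have "JJ G {d} {e} {f} = symdiff (symdiff (basis_prod G d e) (symdiff (basis_prod G d f) (basis_prod G d F1)))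
    (symdiff (symdiff (basis_prod G e f) (symdiff (basis_prod G e d) (basis_prod G e P02)))
     (symdiff (basis_prod G f d) (symdiff (basis_prod G f e) (basis_prod G f E1))))"
    unfolding JJ_bp amult_T[OF TF1] amult_T[OF TD1] amult_T[OF TE1] ..
  also have "basis_prod G e d = basis_prod G d e" using bp_sym d e by simp
  also have "basis_prod G f d = basis_prod G d f" using bp_sym d f by simp
  also have "basis_prod G f e = basis_prod G e f" using bp_sym e f by simp
  also have "basis_prod G d F1 = symdiff {d} (symdiff {P22} {P11})" unfolding F1' using T_sd A by blast
  also have "basis_prod G e P02 = symdiff {e} (symdiff {P02} {P21})" using T_sd A by blast
  also have "basis_prod G f E1 = symdiff {f} (symdiff {P20} {P12})" unfolding E1' using T_sd A by blast
  finally show "JJ G {d} {e} {f} = phi9 d e f ` ag23_points" unfolding img by (simp add: symdiff_ac)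
qed


lemma JJ_cases: assumes d: "d \<in> D" and e: "e \<in> D" and f: "f \<in> D"
  shows "JJ G {d} {e} {f} = {} \<or> (\<exists>\<phi>. (\<forall>v w. v \<in> ag23_points \<longrightarrow> w \<in> ag23_points \<longrightarrow> v \<noteq> w \<longrightarrow>
           T (\<phi> v) (\<phi> w) (\<phi> (third v w))) \<and> JJ G {d} {e} {f} = \<phi> ` ag23_points)"
proof -
  have r1: "JJ G {d} {e} {f} = JJ G {e} {f} {d}" by (rule JJ_rot)
  have r2: "JJ G {d} {e} {f} = JJ G {f} {d} {e}" using JJ_rot by metis
  have sw: "JJ G {d} {e} {f} = JJ G {e} {d} {f}" using JJ_swap d e f by blast
  have sw2: "JJ G {d} {e} {f} = JJ G {d} {f} {e}"
    using JJ_swap[OF f e d] JJ_rot[of G "{d}" "{f}" "{e}"] r1 by metis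
  show ?thesis
  proof (cases "d \<otimes> f = f \<otimes> d \<and> e \<otimes> f = f \<otimes> e")
    case True thus ?thesis using case1[OF d e f] by metis
  next
    case c1: False
    show ?thesis
    proof (cases "d \<otimes> e = e \<otimes> d \<and> d \<otimes> f = f \<otimes> d")
      case True
      hence "JJ G {e} {f} {d} = {}" using case1[OF e f d] by metis
      thus ?thesis using r1 by simp
    next
      case c2: False
      show ?thesis
      proof (cases "d \<otimes> e = e \<otimes> d \<and> e \<otimes> f = f \<otimes> e")
        case True
        hence "JJ G {f} {d} {e} = {}" using case1[OF f d e] by metis
        thus ?thesis using r2 by simp
      next
        case c3: False
        show ?thesis
        proof (cases "d \<otimes> f = f \<otimes> d")
          case True
          hence "d \<otimes> e \<noteq> e \<otimes> d" "e \<otimes> f \<noteq> f \<otimes> e" using c1 c2 by auto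
          thus ?thesis using case2[OF d e f] True by simp
        next
          case ndf: False
          show ?thesis
          proof (cases "d \<otimes> e = e \<otimes> d")
            case True
            hence "f \<otimes> e \<noteq> e \<otimes> f" using c2 c3 ndf by auto
            hence "JJ G {d} {f} {e} = {}" using case2[OF d f e ndf] True by simp
            thus ?thesis using sw2 by simp
          next
            case nde: False
            show ?thesis
            proof (cases "e \<otimes> f = f \<otimes> e")
              case True
              hence "JJ G {e} {d} {f} = {}" using case2[OF e d f] nde ndf by metis
              thus ?thesis using sw by simp
            next
              case nef: False
              show ?thesis
              proof (cases "f \<otimes> (d \<otimes> (e \<otimes> d)) = (d \<otimes> (e \<otimes> d)) \<otimes> f")
                case True thus ?thesis using case3a[OF d e f nde nef ndf] by simp
              next
                case False
                thus ?thesis using case3b[OF d e f nde nef ndf False] by blast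
              qed
            qed
          qed
        qed
      qed
    qed
  qed
qed


lemma D_sub: "fischer_subspace G D D"
  unfolding fischer_subspace_def
proof (intro conjI subset_refl allI impI)
  fix L assume "fischer_line G D L"
  hence "\<exists>x y z. T x y z \<and> L = {x,y,z}" using fl_T by simp
  then obtain x y z where "T x y z" "L = {x,y,z}" by blast
  thus "L \<subseteq> D" using T_D by blast
qed

lemma span_sub: assumes Y: "Y \<subseteq> D" shows "fischer_subspace G D (fischer_span G D Y)"
  unfolding fischer_subspace_def
proof (intro conjI allI impI)
  show "fischer_span G D Y \<subseteq> D" unfolding fischer_span_def using D_sub Y by blast
  fix L assume L: "fischer_line G D L" "2 \<le> card (L \<inter> fischer_span G D Y)"
  have finL: "finite L" using L(1) unfolding fischer_line_def by auto
  show "L \<subseteq> fischer_span G D Y" unfolding fischer_span_def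
  proof (intro subsetI CollectI allI impI)
    fix p S assume p: "p \<in> L" and S: "fischer_subspace G D S \<and> Y \<subseteq> S"
    have "L \<inter> fischer_span G D Y \<subseteq> L \<inter> S" unfolding fischer_span_def using S by blast
    hence "card (L \<inter> fischer_span G D Y) \<le> card (L \<inter> S)" using finL by (intro card_mono) auto
    hence "2 \<le> card (L \<inter> S)" using L(2) by linarith
    hence "L \<subseteq> S" using S L(1) unfolding fischer_subspace_def by blast
    thus "p \<in> S" using p by blast
  qed
qed

lemma plane_props: assumes P: "fischer_plane G D P" and iso: "iso_affine_plane_3 G D P"
  shows "fischer_subspace G D P" "finite P" "card P = 9"
    "\<And>x y. x \<in> P \<Longrightarrow> y \<in> P \<Longrightarrow> x \<noteq> y \<Longrightarrow> x \<otimes> y \<noteq> y \<otimes> x"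
proof -
  obtain L1 L2 where L: "fischer_line G D L1" "fischer_line G D L2" "P = fischer_span G D (L1 \<union> L2)"
    using P unfolding fischer_plane_def by blast
  have lD: "L \<subseteq> D" if "fischer_line G D L" for L
  proof -
    have "\<exists>x y z. T x y z \<and> L = {x,y,z}" using that fl_T by simp
    then obtain x y z where "T x y z" "L = {x,y,z}" by blast
    thus ?thesis using T_D by blast
  qed
  have "L1 \<subseteq> D" "L2 \<subseteq> D" using lD L(1,2) by auto
  thus sub: "fischer_subspace G D P" using span_sub L(3) by simp
  obtain h where h: "bij_betw h P ag23_points" and hl: "\<And>L. L \<subseteq> P \<Longrightarrow> fischer_line G D L \<longleftrightarrow> ag23_line (h ` L)"
    using iso unfolding iso_affine_plane_3_def by blast
  have cp: "card ag23_points = 9" unfolding pts_eq by simp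
  have fp: "finite ag23_points" unfolding pts_eq by simp
  show "finite P" using h fp bij_betw_finite by blast
  show "card P = 9" using h cp bij_betw_same_card by metis
  fix x y assume xy: "x \<in> P" "y \<in> P" "x \<noteq> y"
  define v where "v = h x"
  define w where "w = h y"
  have vw: "v \<in> ag23_points" "w \<in> ag23_points" "v \<noteq> w"
    using h xy unfolding v_def w_def bij_betw_def inj_on_def by auto
  have "third v w \<in> ag23_points" using third_pts vw by blast
  then obtain z where z: "z \<in> P" "h z = third v w" using h unfolding bij_betw_def by (metis imageE)
  have "h ` {x,y,z} = {v, w, third v w}" using z v_def w_def by simp
  hence "ag23_line (h ` {x,y,z})" using third_line vw by simp
  hence "fischer_line G D {x,y,z}" using hl xy z by simp
  hence "\<exists>a b c. T a b c \<and> {x,y,z} = {a,b,c}" using fl_T by simp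
  then obtain a b c where "T a b c" "{x,y,z} = {a,b,c}" by blast
  then obtain c' where "T x y c'" using line_two[of a b c x y] xy by blast
  thus "x \<otimes> y \<noteq> y \<otimes> x" using T_nc by blast
qed

lemma phi9_base: "phi9 d e f (0::int,0::int) = d" "phi9 d e f (1::int,0::int) = e" "phi9 d e f (0::int,1::int) = f"
  unfolding phi9_def pt9_def Let_def by simp_all

lemma dir1: assumes lie: "quotient_is_lie G D II"
  and P: "fischer_plane G D P" and iso: "iso_affine_plane_3 G D P"
  shows "P \<in> II"
proof -
  note pp = plane_props[OF P iso]
  have sub: "fischer_subspace G D P" by (rule pp(1))
  have PD: "P \<subseteq> D" using sub unfolding fischer_subspace_def by blast
  have "P \<noteq> {}" using pp(3) by auto
  then obtain d where d: "d \<in> P" by blast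
  have "\<not> P \<subseteq> {d}"
  proof
    assume "P \<subseteq> {d}" hence "card P \<le> card {d}" by (intro card_mono) auto
    thus False using pp(3) by simp
  qed
  then obtain e where e: "e \<in> P" "e \<noteq> d" by blast
  have nde: "d \<otimes> e \<noteq> e \<otimes> d" using pp(4) d e by metis
  define P20 where "P20 = d \<otimes> (e \<otimes> d)"
  have "T e d P20" unfolding P20_def using mkT PD d e nde by (metis subsetD)
  hence P20: "P20 \<in> P" using sub_T[OF sub] d e by blast
  have "\<not> P \<subseteq> {d, e, P20}"
  proof
    assume "P \<subseteq> {d, e, P20}" hence "card P \<le> card {d, e, P20}" by (intro card_mono) auto
    moreover have "card {d, e, P20} \<le> 3" by (auto simp: card_insert_if)
    ultimately show False using pp(3) by simp
  qed
  then obtain f where f: "f \<in> P" "f \<noteq> d" "f \<noteq> e" "f \<noteq> P20" by blast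
  have dD: "d \<in> D" and eD: "e \<in> D" and fD: "f \<in> D" using PD d e f by auto
  have nef: "e \<otimes> f \<noteq> f \<otimes> e" using pp(4) e f by metis
  have ndf: "d \<otimes> f \<noteq> f \<otimes> d" using pp(4) d f by metis
  have nfa: "f \<otimes> P20 \<noteq> P20 \<otimes> f" using pp(4) P20 f by metis
  note c3 = case3b[OF dD eD fD nde nef ndf nfa[unfolded P20_def]]
  let ?\<phi> = "phi9 d e f"
  have PT: "\<And>v w. v \<in> ag23_points \<Longrightarrow> w \<in> ag23_points \<Longrightarrow> v \<noteq> w \<Longrightarrow> T (?\<phi> v) (?\<phi> w) (?\<phi> (third v w))"
    by (rule c3(2))
  have s1: "?\<phi> (0::int,0::int) \<in> P" "?\<phi> (1::int,0::int) \<in> P" "?\<phi> (0::int,1::int) \<in> P" using phi9_base d e f by auto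
  have s2: "?\<phi> (2::int,0::int) \<in> P" using sub_T[OF sub PT[of "(0::int,0::int)" "(1::int,0::int)"]] s1 by (simp add: pts_eq third_def)
  have s3: "?\<phi> (0::int,2::int) \<in> P" using sub_T[OF sub PT[of "(0::int,0::int)" "(0::int,1::int)"]] s1 by (simp add: pts_eq third_def)
  have s4: "?\<phi> (2::int,2::int) \<in> P" using sub_T[OF sub PT[of "(1::int,0::int)" "(0::int,1::int)"]] s1 by (simp add: pts_eq third_def)
  have s5: "?\<phi> (1::int,1::int) \<in> P" using sub_T[OF sub PT[of "(0::int,0::int)" "(2::int,2::int)"]] s1 s4 by (simp add: pts_eq third_def)
  have s6: "?\<phi> (2::int,1::int) \<in> P" using sub_T[OF sub PT[of "(1::int,0::int)" "(0::int,2::int)"]] s1 s3 by (simp add: pts_eq third_def)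
  have s7: "?\<phi> (1::int,2::int) \<in> P" using sub_T[OF sub PT[of "(2::int,0::int)" "(0::int,1::int)"]] s1 s2 by (simp add: pts_eq third_def)
  have sub9: "?\<phi> ` ag23_points \<subseteq> P" unfolding pts_eq using s1 s2 s3 s4 s5 s6 s7 by auto
  have inj: "inj_on ?\<phi> ag23_points" using plane_of_phi(1)[OF PT] .
  have "card (?\<phi> ` ag23_points) = 9" using card_image[OF inj] by (simp add: pts_eq)
  hence eqP: "?\<phi> ` ag23_points = P" using sub9 pp(2,3) by (metis card_subset_eq)
  have "JJ G {d} {e} {f} \<in> II" using lie dD eD fD unfolding quotient_is_lie_def JJ_def AD_def by auto
  thus ?thesis using c3(1) eqP by simp
qed

lemma dir2: assumes I: "AD_ideal G D II"
  and H: "\<forall>P. fischer_plane G D P \<and> iso_affine_plane_3 G D P \<longrightarrow> P \<in> II"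
  shows "quotient_is_lie G D II"
proof -
  have I0: "{} \<in> II" and Ic: "\<And>a b. a \<in> II \<Longrightarrow> b \<in> II \<Longrightarrow> symdiff a b \<in> II"
    using I unfolding AD_ideal_def by auto
  have base: "JJ G {a} {b} {c} \<in> II" if "a \<in> D" "b \<in> D" "c \<in> D" for a b c
  proof -
    from JJ_cases[OF that] show ?thesis
    proof
      assume "JJ G {a} {b} {c} = {}" thus ?thesis using I0 by simp
    next
      assume "\<exists>\<phi>. (\<forall>v w. v \<in> ag23_points \<longrightarrow> w \<in> ag23_points \<longrightarrow> v \<noteq> w \<longrightarrow>
           T (\<phi> v) (\<phi> w) (\<phi> (third v w))) \<and> JJ G {a} {b} {c} = \<phi> ` ag23_points"
      then obtain \<phi> where PT: "\<And>v w. v \<in> ag23_points \<Longrightarrow> w \<in> ag23_points \<Longrightarrow> v \<noteq> w \<Longrightarrow>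
           T (\<phi> v) (\<phi> w) (\<phi> (third v w))" and eq: "JJ G {a} {b} {c} = \<phi> ` ag23_points" by blast
      have "fischer_plane G D (\<phi> ` ag23_points)" "iso_affine_plane_3 G D (\<phi> ` ag23_points)"
        using plane_of_phi(3,4)[OF PT] by auto
      thus ?thesis using H eq by simp
    qed
  qed
  show ?thesis unfolding quotient_is_lie_def
  proof (intro conjI ballI)
    fix x assume "x \<in> AD D"
    hence "amult G x x = {}" using amult_self unfolding AD_def by simp
    thus "amult G x x \<in> II" using I0 by simp
  next
    fix x y z assume xyz: "x \<in> AD D" "y \<in> AD D" "z \<in> AD D"
    have "JJ G x y z \<in> II"
    proof (rule JJ_closure[OF I0 Ic])
      show "finite x" "finite y" "finite z" using xyz unfolding AD_def by auto
      show "JJ G {a} {b} {c} \<in> II" if "a \<in> x" "b \<in> y" "c \<in> z" for a b c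
        using base that xyz unfolding AD_def by blast
    qed
    thus "symdiff (amult G x (amult G y z)) (symdiff (amult G y (amult G z x)) (amult G z (amult G x y))) \<in> II"
      unfolding JJ_def .
  qed
qed

end

lemma (in group) inv_cancel_l: "g \<in> carrier G \<Longrightarrow> w \<in> carrier G \<Longrightarrow> inv g \<otimes> (g \<otimes> w) = w"
  by (simp add: m_assoc[symmetric])

lemma (in group) fis_setup:
  assumes d0: "d0 \<in> carrier G"
    and Ddef: "D = {g \<otimes> d0 \<otimes> inv g | g. g \<in> carrier G}"
    and inv0: "d0 \<otimes> d0 = \<one>"
    and ord: "\<forall>d\<in>D. \<forall>e\<in>D. ord (d \<otimes> e) \<in> {1, 2, 3}"
  shows "fis G D"
proof -
  have Dc: "D \<subseteq> carrier G" unfolding Ddef using d0 by auto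
  have Dinv: "x \<otimes> x = \<one>" if xD: "x \<in> D" for x
  proof -
    obtain g where g: "g \<in> carrier G" "x = g \<otimes> d0 \<otimes> inv g" using xD unfolding Ddef by blast
    have "x \<otimes> x = g \<otimes> (d0 \<otimes> d0) \<otimes> inv g" using g d0 by (simp add: m_assoc inv_cancel_l)
    thus ?thesis using inv0 g by simp
  qed
  have Dinvv: "inv x = x" if xD: "x \<in> D" for x using Dinv[OF xD] Dc xD inv_equality by blast
  have Dcl: "h \<otimes> x \<otimes> h \<in> D" if xh: "x \<in> D" "h \<in> D" for x h
  proof -
    obtain g where g: "g \<in> carrier G" "x = g \<otimes> d0 \<otimes> inv g" using xh(1) unfolding Ddef by blast
    have hc: "h \<in> carrier G" using xh Dc by auto
    have "h \<otimes> x \<otimes> h = (h \<otimes> g) \<otimes> d0 \<otimes> inv (h \<otimes> g)"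
      using g hc d0 Dinvv[OF xh(2)] by (simp add: m_assoc inv_mult_group)
    thus ?thesis unfolding Ddef using g hc by blast
  qed
  have Dbr: "x \<otimes> y \<otimes> x = y \<otimes> x \<otimes> y" if xy: "x \<in> D" "y \<in> D" "x \<otimes> y \<noteq> y \<otimes> x" for x y
  proof -
    have xc: "x \<in> carrier G" and yc: "y \<in> carrier G" using xy Dc by auto
    have o: "(x \<otimes> y) [^] ord (x \<otimes> y) = \<one>" using xc yc by simp
    have "ord (x \<otimes> y) \<in> {1,2,3}" using ord xy by auto
    moreover have "ord (x \<otimes> y) \<noteq> 1"
    proof
      assume "ord (x \<otimes> y) = 1"
      hence "x \<otimes> y = \<one>" using o xc yc by simp
      hence "x \<otimes> (x \<otimes> y) = x" using xc by simp
      hence "y = x" using Dinv[OF xy(1)] xc yc by (simp add: m_assoc[symmetric])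
      thus False using xy by simp
    qed
    moreover have "ord (x \<otimes> y) \<noteq> 2"
    proof
      assume "ord (x \<otimes> y) = 2"
      hence "(x \<otimes> y) \<otimes> (x \<otimes> y) = \<one>" using o xc yc by (simp add: numeral_2_eq_2)
      hence "x \<otimes> y = inv (x \<otimes> y)" using xc yc by (metis inv_equality m_closed)
      also have "\<dots> = y \<otimes> x" using xc yc Dinvv xy by (simp add: inv_mult_group)
      finally show False using xy by simp
    qed
    ultimately have "ord (x \<otimes> y) = 3" by auto
    hence "(x \<otimes> y) \<otimes> (x \<otimes> y) \<otimes> (x \<otimes> y) = \<one>" using o xc yc by (simp add: numeral_3_eq_3)
    hence "(x \<otimes> y \<otimes> x) \<otimes> (y \<otimes> x \<otimes> y) = \<one>" using xc yc by (simp add: m_assoc)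
    hence "x \<otimes> y \<otimes> x = inv (y \<otimes> x \<otimes> y)" using xc yc by (metis inv_equality m_closed)
    also have "\<dots> = y \<otimes> x \<otimes> y" using xc yc Dinvv xy by (simp add: inv_mult_group m_assoc)
    finally show ?thesis .
  qed
  show ?thesis
    by (unfold_locales) (use Dc Dinv Dcl Dbr in auto)
qed

theorem proposition2p9:
  fixes G :: "('a, 'b) monoid_scheme" and D :: "'a set" and d0 :: 'a and I :: "'a set set"
  assumes "group G"
    and "d0 \<in> carrier G"
    and "D = {g \<otimes>\<^bsub>G\<^esub> d0 \<otimes>\<^bsub>G\<^esub> inv\<^bsub>G\<^esub> g | g. g \<in> carrier G}"
    and "d0 \<noteq> \<one>\<^bsub>G\<^esub>" and "d0 \<otimes>\<^bsub>G\<^esub> d0 = \<one>\<^bsub>G\<^esub>"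
    and "generate G D = carrier G"
    and "\<forall>d\<in>D. \<forall>e\<in>D. group.ord G (d \<otimes>\<^bsub>G\<^esub> e) \<in> {1, 2, 3}"
    and "AD_ideal G D I"
  shows "quotient_is_lie G D I \<longleftrightarrow>
    (\<forall>P. fischer_plane G D P \<and> iso_affine_plane_3 G D P \<longrightarrow> P \<in> I)"
proof -
  interpret group G by (rule assms(1))
  interpret fis G D by (rule fis_setup[OF assms(2,3,5,7)])
  show ?thesis using dir1 dir2[OF assms(8)] by blast
qed

end
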